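(* Let $p$ be a prime and $b$ an integer with $\frac{p-1}{2}<b<p$ and $(p-b)(p-b^{-1})=2p+1$. Set $\alpha=\frac{p-b^{-1}+1}{2}$ and $\beta=\frac{p-b+1}{2}$. Then $|\mathrm{inv}_{1,b}|=5$, so $R=\mathbb{C}[y_0,\dots,y_4]$, and $$\ker\varphi_{1,b}=\langle y_2^2-y_1y_3,\ y_1^{\alpha-1}y_2-y_0y_3,\ y_3^{\beta}-y_2y_4,\ y_1^{\alpha}-y_0y_2,\ y_2y_3^{\beta-1}-y_1y_4,\ y_1^{\alpha-1}y_3^{\beta-1}-y_0y_4\rangle.$$
   Context: Let $S=\mathbb{C}[x_1,x_2]$ (standard grading), $\zeta=e^{2\pi i/p}$, $G=\mathbb{Z}/p\mathbb{Z}=\langle\zeta\rangle$ acting on $S$ by $x_1\mapsto\zeta x_1$, $x_2\mapsto\zeta^bx_2$, with invariant ring $S^G_{1,b}$ (spanned by monomials $x_1^cx_2^d$ with $c+bd\equiv0\pmod p$). $\mathrm{inv}_{1,b}$ denotes the minimal set of monomial generators of $S^G_{1,b}$ as a $\mathbb{C}$-algebra: the nonconstant invariant monomials that are not a product of two nonconstant invariant monomials. Writing $\mathrm{inv}_{1,b}=\{z_0,\dots,z_n\}$ in lexicographic order with $x_1>x_2$ (decreasing exponent of $x_1$), $R=\mathbb{C}[y_0,\dots,y_n]$ with $\deg y_i=\deg z_i$, and $\varphi_{1,b}:R\to S^G_{1,b}$ is the $\mathbb{C}$-algebra map $y_i\mapsto z_i$. $b^{-1}$ is the unique integer $0<b^{-1}<p$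 with $bb^{-1}\equiv1\pmod p$. *)

theory Defs
  imports Complex_Main "HOL-Library.Poly_Mapping" "HOL-Library.Product_Lexorder" "HOL-Computational_Algebra.Primes"
begin

text \<open>S = C[x1,x2] is realised with x1 = Var 0, x2 = Var 1; R = C[y0..yn] with y_i = Var i.\<close>

type_synonym cpoly = "(nat \<Rightarrow>\<^sub>0 nat) \<Rightarrow>\<^sub>0 complex"

definition Var :: "nat \<Rightarrow> cpoly" where
  "Var i = Poly_Mapping.single (Poly_Mapping.single i 1) 1"

definition Cst :: "complex \<Rightarrow> cpoly" where
  "Cst c = Poly_Mapping.single 0 c"

definition eval_poly :: "(nat \<Rightarrow> cpoly) \<Rightarrow> cpoly \<Rightarrow> cpoly" where
  "eval_poly f P = (\<Sum>m\<in>Poly_Mapping.keys P. Cst (Poly_Mapping.lookup P m) * (\<Prod>i\<in>Poly_Mapping.keys m. f i ^ Poly_Mapping.lookup (m :: nat \<Rightarrow>\<^sub>0 nat) (i::nat)))"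

definition in_vars :: "nat \<Rightarrow> cpoly \<Rightarrow> bool" where
  "in_vars n P = (\<forall>m\<in>Poly_Mapping.keys P. Poly_Mapping.keys m \<subseteq> {..<n})"

definition ideal_in :: "nat \<Rightarrow> cpoly set \<Rightarrow> cpoly set" where
  "ideal_in n G = {\<Sum>g\<in>G. h g * g | h. \<forall>g\<in>G. in_vars n (h g)}"

text \<open>x1^c x2^d is invariant under x1 \<mapsto> \<zeta> x1, x2 \<mapsto> \<zeta>^b x2.\<close>
definition inv_mono :: "nat \<Rightarrow> int \<Rightarrow> nat \<times> nat \<Rightarrow> bool" where
  "inv_mono p b e = ((int (fst e) + b * int (snd e)) mod int p = 0)"

definition inv_gens :: "nat \<Rightarrow> int \<Rightarrow> (nat \<times> nat) set" where
  "inv_gens p b = {e. inv_mono p b e \<and> e \<noteq> (0,0) \<and>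
     \<not> (\<exists>e1 e2. inv_mono p b e1 \<and> inv_mono p b e2 \<and> e1 \<noteq> (0,0) \<and> e2 \<noteq> (0,0) \<and>
              fst e = fst e1 + fst e2 \<and> snd e = snd e1 + snd e2)}"

text \<open>z_0,...,z_n in lexicographic order with x1 > x2 (decreasing exponent of x1).\<close>
definition inv_list :: "nat \<Rightarrow> int \<Rightarrow> (nat \<times> nat) list" where
  "inv_list p b = rev (sorted_list_of_set (inv_gens p b))"

definition phi :: "nat \<Rightarrow> int \<Rightarrow> cpoly \<Rightarrow> cpoly" where
  "phi p b P = eval_poly (\<lambda>i. Var 0 ^ fst (inv_list p b ! i) * Var 1 ^ snd (inv_list p b ! i)) P"

definition ker_phi :: "nat \<Rightarrow> int \<Rightarrow> cpoly set" where
  "ker_phi p b = {P. in_vars (card (inv_gens p b)) P \<and> phi p b P = 0}"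

definition inv_modp :: "nat \<Rightarrow> int \<Rightarrow> int" where
  "inv_modp p b = (THE c. 0 < c \<and> c < int p \<and> (b * c) mod int p = 1)"

end

theory Submission
  imports Defs "HOL-Number_Theory.Cong"
begin


definition Mon :: "(nat \<Rightarrow> cpoly) \<Rightarrow> (nat \<Rightarrow>\<^sub>0 nat) \<Rightarrow> cpoly" where
  "Mon f m = (\<Prod>i\<in>Poly_Mapping.keys m. f i ^ Poly_Mapping.lookup m i)"

lemma Mon_superset:
  assumes "finite S" "Poly_Mapping.keys m \<subseteq> S"
  shows "Mon f m = (\<Prod>i\<in>S. f i ^ Poly_Mapping.lookup m i)"
  unfolding Mon_def
  by (rule prod.mono_neutral_left) (use assms in \<open>auto simp: in_keys_iff\<close>)

lemma Mon_add: "Mon f (m + n) = Mon f m * Mon f n"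
proof -
  let ?S = "Poly_Mapping.keys m \<union> Poly_Mapping.keys n"
  have f: "finite ?S" by simp
  have sub: "Poly_Mapping.keys (m + n) \<subseteq> ?S" by (rule keys_add)
  have "Mon f (m+n) = (\<Prod>i\<in>?S. f i ^ Poly_Mapping.lookup (m+n) i)"
    by (rule Mon_superset[OF f sub])
  also have "\<dots> = (\<Prod>i\<in>?S. f i ^ Poly_Mapping.lookup m i * f i ^ Poly_Mapping.lookup n i)"
    by (rule prod.cong) (simp_all only: lookup_add power_add)
  also have "\<dots> = (\<Prod>i\<in>?S. f i ^ Poly_Mapping.lookup m i) * (\<Prod>i\<in>?S. f i ^ Poly_Mapping.lookup n i)"
    by (rule prod.distrib)
  also have "\<dots> = Mon f m * Mon f n"
    using Mon_superset[OF f, of m f] Mon_superset[OF f, of n f] by simp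
  finally show ?thesis .
qed

lemma Mon_zero [simp]: "Mon f 0 = 1" by (simp add: Mon_def)

lemma Cst_0 [simp]: "Cst 0 = 0" by (simp add: Cst_def)
lemma Cst_1 [simp]: "Cst 1 = 1" by (simp add: Cst_def)
lemma Cst_add: "Cst (a + b) = Cst a + Cst b" by (simp add: Cst_def single_add)
lemma Cst_mult: "Cst (a * b) = Cst a * Cst b" by (simp add: Cst_def mult_single)

lemma eval_superset:
  assumes "finite S" "Poly_Mapping.keys P \<subseteq> S"
  shows "eval_poly f P = (\<Sum>m\<in>S. Cst (Poly_Mapping.lookup P m) * Mon f m)"
  unfolding eval_poly_def Mon_def[symmetric]
  by (rule sum.mono_neutral_left) (use assms in \<open>auto simp: in_keys_iff\<close>)

lemma eval_add: "eval_poly f (P + Q) = eval_poly f P + eval_poly f Q"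
proof -
  let ?S = "Poly_Mapping.keys P \<union> Poly_Mapping.keys Q"
  have f: "finite ?S" by simp
  have sub: "Poly_Mapping.keys (P + Q) \<subseteq> ?S" by (rule keys_add)
  have "eval_poly f (P+Q) = (\<Sum>m\<in>?S. Cst (Poly_Mapping.lookup (P+Q) m) * Mon f m)"
    by (rule eval_superset[OF f sub])
  also have "\<dots> = (\<Sum>m\<in>?S. Cst (Poly_Mapping.lookup P m) * Mon f m + Cst (Poly_Mapping.lookup Q m) * Mon f m)"
    by (rule sum.cong) (simp_all only: lookup_add Cst_add distrib_right)
  also have "\<dots> = (\<Sum>m\<in>?S. Cst (Poly_Mapping.lookup P m) * Mon f m) + (\<Sum>m\<in>?S. Cst (Poly_Mapping.lookup Q m) * Mon f m)"
    by (rule sum.distrib)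
  also have "\<dots> = eval_poly f P + eval_poly f Q"
    using eval_superset[OF f, of P f] eval_superset[OF f, of Q f] by simp
  finally show ?thesis .
qed

lemma eval_zero [simp]: "eval_poly f 0 = 0" by (simp add: eval_poly_def)

lemma eval_single: "eval_poly f (Poly_Mapping.single m c) = Cst c * Mon f m"
  by (subst eval_superset[of "{m}"]) auto

lemma eval_sum: "eval_poly f (\<Sum>x\<in>A. g x) = (\<Sum>x\<in>A. eval_poly f (g x))"
  by (induction A rule: infinite_finite_induct) (auto simp: eval_add)

lemma poly_expand: "P = (\<Sum>m\<in>Poly_Mapping.keys P. Poly_Mapping.single m (Poly_Mapping.lookup P m))"
proof (rule poly_mapping_eqI)
  fix k
  have "Poly_Mapping.lookup (\<Sum>m\<in>Poly_Mapping.keys P. Poly_Mapping.single m (Poly_Mapping.lookup P m)) k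
     = (\<Sum>m\<in>Poly_Mapping.keys P. if m = k then Poly_Mapping.lookup P m else 0)"
    by (simp add: lookup_sum lookup_single when_def)
  also have "\<dots> = Poly_Mapping.lookup P k"
    by (simp add: sum.delta in_keys_iff)
  finally show "Poly_Mapping.lookup P k = Poly_Mapping.lookup (\<Sum>m\<in>Poly_Mapping.keys P. Poly_Mapping.single m (Poly_Mapping.lookup P m)) k" by simp
qed

lemma eval_mult: "eval_poly f (P * Q) = eval_poly f P * eval_poly f Q"
proof -
  let ?A = "Poly_Mapping.keys P" and ?B = "Poly_Mapping.keys Q"
  have "P * Q = (\<Sum>m\<in>?A. Poly_Mapping.single m (Poly_Mapping.lookup P m)) * (\<Sum>n\<in>?B. Poly_Mapping.single n (Poly_Mapping.lookup Q n))"
    using poly_expand[of P] poly_expand[of Q] by simp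
  also have "\<dots> = (\<Sum>m\<in>?A. \<Sum>n\<in>?B. Poly_Mapping.single (m+n) (Poly_Mapping.lookup P m * Poly_Mapping.lookup Q n))"
    by (simp add: sum_product mult_single)
  finally have e: "P * Q = \<dots>" .
  have "eval_poly f (P*Q) = (\<Sum>m\<in>?A. \<Sum>n\<in>?B. (Cst (Poly_Mapping.lookup P m) * Mon f m) * (Cst (Poly_Mapping.lookup Q n) * Mon f n))"
    by (subst e) (simp add: eval_sum eval_single Cst_mult Mon_add mult_ac)
  also have "\<dots> = eval_poly f P * eval_poly f Q"
    by (simp add: sum_product eval_poly_def Mon_def)
  finally show ?thesis .
qed

lemma eval_uminus: "eval_poly f (- P) = - eval_poly f P"
  using eval_add[of f P "-P"] by (simp add: eq_neg_iff_add_eq_0 add.commute)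

lemma eval_diff: "eval_poly f (P - Q) = eval_poly f P - eval_poly f Q"
  using eval_add[of f P "-Q"] eval_uminus[of f Q] by simp

lemma eval_one [simp]: "eval_poly f 1 = 1"
  using eval_single[of f 0 1] by (simp add: Cst_def)

lemma eval_power: "eval_poly f (P ^ k) = eval_poly f P ^ k"
  by (induction k) (auto simp: eval_mult)

lemma eval_Var: "eval_poly f (Var i) = f i"
  by (simp add: Var_def eval_single Mon_def)

lemma eval_Cst: "eval_poly f (Cst c) = Cst c"
  by (simp add: Cst_def eval_single)

lemma in_vars_zero [simp]: "in_vars n 0" by (simp add: in_vars_def)

lemma in_vars_add: "in_vars n P \<Longrightarrow> in_vars n Q \<Longrightarrow> in_vars n (P + Q)"
  unfolding in_vars_def
proof
  fix m assume a: "\<forall>m\<in>Poly_Mapping.keys P. Poly_Mapping.keys m \<subseteq> {..<n}"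
    "\<forall>m\<in>Poly_Mapping.keys Q. Poly_Mapping.keys m \<subseteq> {..<n}" and m: "m \<in> Poly_Mapping.keys (P + Q)"
  have "m \<in> Poly_Mapping.keys P \<union> Poly_Mapping.keys Q" using m keys_add[of P Q] by (rule subsetD[rotated])
  then show "Poly_Mapping.keys m \<subseteq> {..<n}" using a by (elim UnE) simp_all
qed

lemma in_vars_uminus: "in_vars n P \<Longrightarrow> in_vars n (- P)"
  unfolding in_vars_def by (simp add: keys_minus)

lemma in_vars_diff: "in_vars n P \<Longrightarrow> in_vars n Q \<Longrightarrow> in_vars n (P - Q)"
  using in_vars_add[of n P "-Q"] in_vars_uminus[of n Q] by simp

lemma in_vars_mult: "in_vars n P \<Longrightarrow> in_vars n Q \<Longrightarrow> in_vars n (P * Q)"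
  unfolding in_vars_def
proof
  fix m assume a: "\<forall>m\<in>Poly_Mapping.keys P. Poly_Mapping.keys m \<subseteq> {..<n}"
    "\<forall>m\<in>Poly_Mapping.keys Q. Poly_Mapping.keys m \<subseteq> {..<n}" and m: "m \<in> Poly_Mapping.keys (P * Q)"
  have "m \<in> {x + y |x y. x \<in> Poly_Mapping.keys P \<and> y \<in> Poly_Mapping.keys Q}"
    using m keys_mult[of P Q] by (rule subsetD[rotated])
  then obtain x y where xy: "m = x + y" "x \<in> Poly_Mapping.keys P" "y \<in> Poly_Mapping.keys Q"
    by (auto simp only: mem_Collect_eq)
  have "Poly_Mapping.keys m \<subseteq> Poly_Mapping.keys x \<union> Poly_Mapping.keys y" unfolding xy(1) by (rule keys_add)
  moreover have "Poly_Mapping.keys x \<subseteq> {..<n}" "Poly_Mapping.keys y \<subseteq> {..<n}" using a xy by simp_all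
  ultimately show "Poly_Mapping.keys m \<subseteq> {..<n}" by (simp only: Un_subset_iff subset_trans)
qed

lemma in_vars_single: "Poly_Mapping.keys m \<subseteq> {..<n} \<Longrightarrow> in_vars n (Poly_Mapping.single m c)"
  by (simp add: in_vars_def)

lemma in_vars_one [simp]: "in_vars n 1"
  by (simp add: in_vars_def)

lemma in_vars_Cst [simp]: "in_vars n (Cst c)"
  by (simp add: in_vars_def Cst_def)

lemma in_vars_Var: "i < n \<Longrightarrow> in_vars n (Var i)"
  by (simp add: in_vars_def Var_def)

lemma in_vars_power: "in_vars n P \<Longrightarrow> in_vars n (P ^ k)"
  by (induction k) (auto simp: in_vars_mult)

lemma in_vars_sum: "(\<And>x. x \<in> A \<Longrightarrow> in_vars n (g x)) \<Longrightarrow> in_vars n (\<Sum>x\<in>A. g x)"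
  by (induction A rule: infinite_finite_induct) (auto simp: in_vars_add)

lemma ideal_zero: "0 \<in> ideal_in n G"
  unfolding ideal_in_def by (rule CollectI, rule exI[of _ "\<lambda>_. 0"]) simp

lemma ideal_add: "P \<in> ideal_in n G \<Longrightarrow> Q \<in> ideal_in n G \<Longrightarrow> P + Q \<in> ideal_in n G"
proof -
  assume "P \<in> ideal_in n G" "Q \<in> ideal_in n G"
  then obtain h1 h2 where "P = (\<Sum>g\<in>G. h1 g * g)" "\<forall>g\<in>G. in_vars n (h1 g)"
     "Q = (\<Sum>g\<in>G. h2 g * g)" "\<forall>g\<in>G. in_vars n (h2 g)" unfolding ideal_in_def by blast
  then show ?thesis unfolding ideal_in_def
    by (intro CollectI exI[of _ "\<lambda>g. h1 g + h2 g"]) (auto simp: distrib_right sum.distrib in_vars_add)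
qed

lemma ideal_mult: "P \<in> ideal_in n G \<Longrightarrow> in_vars n R \<Longrightarrow> R * P \<in> ideal_in n G"
proof -
  assume "P \<in> ideal_in n G" "in_vars n R"
  then obtain h1 where "P = (\<Sum>g\<in>G. h1 g * g)" "\<forall>g\<in>G. in_vars n (h1 g)"
     unfolding ideal_in_def by blast
  then show ?thesis unfolding ideal_in_def using \<open>in_vars n R\<close>
    by (intro CollectI exI[of _ "\<lambda>g. R * h1 g"]) (auto simp: sum_distrib_left in_vars_mult mult_ac)
qed

lemma ideal_uminus: "P \<in> ideal_in n G \<Longrightarrow> - P \<in> ideal_in n G"
  using ideal_mult[of P n G "-1"] by (simp add: in_vars_uminus)

lemma ideal_diff: "P \<in> ideal_in n G \<Longrightarrow> Q \<in> ideal_in n G \<Longrightarrow> P - Q \<in> ideal_in n G"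
  using ideal_add[of P n G "-Q"] ideal_uminus[of Q n G] by simp

lemma ideal_sum: "(\<And>x. x \<in> A \<Longrightarrow> g x \<in> ideal_in n G) \<Longrightarrow> (\<Sum>x\<in>A. g x) \<in> ideal_in n G"
  by (induction A rule: infinite_finite_induct) (auto simp: ideal_add ideal_zero)

lemma ideal_gen: "finite G \<Longrightarrow> g \<in> G \<Longrightarrow> g \<in> ideal_in n G"
proof -
  assume a: "finite G" "g \<in> G"
  have "(\<Sum>g'\<in>G. (if g' = g then 1 else 0) * g') = (\<Sum>g'\<in>G. if g' = g then g' else 0)"
    by (rule sum.cong) auto
  also have "\<dots> = g" using a by simp
  finally show ?thesis unfolding ideal_in_def
    by (intro CollectI exI[of _ "\<lambda>g'. if g' = g then 1 else 0"]) auto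
qed

lemma ideal_in_vars: "(\<And>g. g \<in> G \<Longrightarrow> in_vars n g) \<Longrightarrow> P \<in> ideal_in n G \<Longrightarrow> in_vars n P"
  unfolding ideal_in_def by (auto intro!: in_vars_sum in_vars_mult)

lemma ideal_eval: "(\<And>g. g \<in> G \<Longrightarrow> eval_poly f g = 0) \<Longrightarrow> P \<in> ideal_in n G \<Longrightarrow> eval_poly f P = 0"
  unfolding ideal_in_def by (auto simp: eval_sum eval_mult)


lemma basis_solve:
  fixes x1 y1 x2 y2 c d p :: int
  assumes "x1*y2 - y1*x2 = p" "p > 0" "p dvd (c*y2 - d*x2)" "p dvd (x1*d - y1*c)"
    "c*y2 - d*x2 \<ge> 0" "x1*d - y1*c \<ge> 0"
  shows "\<exists>s t::nat. c = int s*x1 + int t*x2 \<and> d = int s*y1 + int t*y2"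
proof -
  obtain S where S: "c*y2 - d*x2 = p*S" using assms(3) unfolding dvd_def by blast
  obtain T where T: "x1*d - y1*c = p*T" using assms(4) unfolding dvd_def by blast
  have S0: "S \<ge> 0" using S assms(2,5) by (simp add: zero_le_mult_iff)
  have T0: "T \<ge> 0" using T assms(2,6) by (simp add: zero_le_mult_iff)
  have i1: "(x1*y2 - y1*x2)*c = x1*(c*y2 - d*x2) + x2*(x1*d - y1*c)" by (simp add: algebra_simps)
  have "p*c = p*(S*x1 + T*x2)" using i1 unfolding assms(1) S T by (simp add: algebra_simps)
  then have c: "c = S*x1 + T*x2" using assms(2) by simp
  have i2: "(x1*y2 - y1*x2)*d = y1*(c*y2 - d*x2) + y2*(x1*d - y1*c)" by (simp add: algebra_simps)
  have "p*d = p*(S*y1 + T*y2)" using i2 unfolding assms(1) S T by (simp add: algebra_simps)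
  then have d: "d = S*y1 + T*y2" using assms(2) by simp
  show ?thesis using c d S0 T0 by (intro exI[of _ "nat S"] exI[of _ "nat T"]) simp
qed

locale cfg = fixes a k :: nat
begin

definition pp :: nat where "pp = 2*a*k + 3*a + 5*k + 7"
definition q :: nat where "q = 2*k + 3"

definition z :: "nat \<Rightarrow> nat \<times> nat" where
  "z i = (if i = 0 then (pp, 0) else if i = 1 then (2*k+3, 1) else if i = 2 then (k+2, a+3)
          else if i = 3 then (1, 2*a+5) else (0, pp))"

lemma z_simps [simp]: "z 0 = (pp,0)" "z 1 = (2*k+3, 1)" "z 2 = (k+2, a+3)" "z 3 = (1, 2*a+5)" "z 4 = (0, pp)"
  by (simp_all add: z_def)

lemma z_Suc_simps [simp]: "z (Suc 0) = (2*k+3, 1)" "z (Suc (Suc 0)) = (k+2, a+3)" "z (Suc (Suc (Suc 0))) = (1, 2*a+5)"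
  "z (Suc (Suc (Suc (Suc 0)))) = (0, pp)"
  by (simp_all add: z_def)

definition SG :: "nat \<times> nat \<Rightarrow> bool" where
  "SG e = (int pp dvd (int (fst e) - int q * int (snd e)))"

lemma le4_cases: "i \<le> (4::nat) \<Longrightarrow> i = 0 \<or> i = 1 \<or> i = 2 \<or> i = 3 \<or> i = 4" by auto
lemma lt4_cases: "i < (4::nat) \<Longrightarrow> i = 0 \<or> i = 1 \<or> i = 2 \<or> i = 3" by auto

lemma SG_z: "i \<le> 4 \<Longrightarrow> SG (z i)"
proof -
  assume "i \<le> 4"
  then consider "i = 0" | "i = 1" | "i = 2" | "i = 3" | "i = 4" by linarith
  then show ?thesis
  proof cases
    case 3
    have "int (k+2) - int q * int (a+3) = int pp * (-1)" by (simp add: pp_def q_def algebra_simps)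
    then show ?thesis using 3 unfolding SG_def by (metis dvd_triv_left fst_conv snd_conv z_simps(3))
  next
    case 4
    have "int 1 - int q * int (2*a+5) = int pp * (-2)" by (simp add: pp_def q_def algebra_simps)
    then show ?thesis using 4 unfolding SG_def by (metis dvd_triv_left fst_conv snd_conv z_simps(4))
  qed (auto simp: SG_def q_def)
qed

definition comb :: "nat \<Rightarrow> nat \<Rightarrow> nat \<Rightarrow> nat \<times> nat" where
  "comb i s t = (s * fst (z i) + t * fst (z (Suc i)), s * snd (z i) + t * snd (z (Suc i)))"

lemma pp_pos: "pp > 0" by (simp add: pp_def)

lemma cone_decomp:
  assumes "SG (c, d)"
  shows "\<exists>i<4. \<exists>s t. (c, d) = comb i s t"
proof -
  let ?P = "int pp"
  have dv: "?P dvd (int c * int (snd (z j)) - int d * int (fst (z j)))" if "j \<le> 4" for j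
  proof -
    have "?P dvd (int (fst (z j)) - int q * int (snd (z j)))" using SG_z[OF that] by (simp add: SG_def)
    moreover have "?P dvd (int c - int q * int d)" using assms by (simp add: SG_def)
    ultimately have "?P dvd ((int c - int q * int d) * int (snd (z j)) - int d * (int (fst (z j)) - int q * int (snd (z j))))"
      by (simp add: dvd_diff)
    then show ?thesis by (simp add: algebra_simps)
  qed
  have dv': "?P dvd (int (fst (z j)) * int d - int (snd (z j)) * int c)" if "j \<le> 4" for j
  proof -
    have e: "int (fst (z j)) * int d - int (snd (z j)) * int c = - (int c * int (snd (z j)) - int d * int (fst (z j)))"
      by (simp add: algebra_simps)
    show ?thesis unfolding e using dv[OF that] by (simp only: dvd_minus_iff)
  qed
  have det: "int (fst (z i)) * int (snd (z (Suc i))) - int (snd (z i)) * int (fst (z (Suc i))) = ?P"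
    if "i < 4" for i
    using lt4_cases[OF that] by (auto simp: pp_def algebra_simps)
  define f where "f j = int (fst (z j)) * int d - int (snd (z j)) * int c" for j
  have f0: "f 0 \<ge> 0" by (simp add: f_def)
  have f4: "f 4 \<le> 0" by (simp add: f_def)
  have main: "\<exists>s t. (c, d) = comb i s t"
    if i: "i < 4" and f1: "f (i+1) \<le> 0" and s2: "f i \<ge> 0" for i
  proof -
    have s1: "int c * int (snd (z (Suc i))) - int d * int (fst (z (Suc i))) \<ge> 0"
      using f1 unfolding f_def by (simp add: algebra_simps)
    have s2: "int (fst (z i)) * int d - int (snd (z i)) * int c \<ge> 0" using s2 unfolding f_def .
    obtain s t :: nat where st: "int c = int s * int (fst (z i)) + int t * int (fst (z (Suc i)))"
        "int d = int s * int (snd (z i)) + int t * int (snd (z (Suc i)))"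
      using basis_solve[OF det[OF i] _ dv[of "Suc i"] dv'[of i] s1 s2] i pp_pos by auto
    then have "c = s * fst (z i) + t * fst (z (Suc i))" "d = s * snd (z i) + t * snd (z (Suc i))"
      by (metis of_nat_add of_nat_mult of_nat_eq_iff)+
    then show ?thesis by (auto simp: comb_def)
  qed
  show ?thesis
  proof (cases "f 1 \<le> 0")
    case True
    then have "\<exists>s t. (c, d) = comb 0 s t" using main[of 0] f0 by simp
    then show ?thesis by (intro exI[of _ 0]) simp
  next
    case c1: False
    show ?thesis
    proof (cases "f 2 \<le> 0")
      case True
      then have "\<exists>s t. (c, d) = comb 1 s t" using c1 by (intro main) (simp_all add: numeral_2_eq_2)
      then show ?thesis by (intro exI[of _ 1]) simp
    next
      case c2: False
      show ?thesis
      proof (cases "f 3 \<le> 0")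
        case True
        then have "\<exists>s t. (c, d) = comb 2 s t" using c2 by (intro main) simp_all
        then show ?thesis by (intro exI[of _ 2]) simp
      next
        case c3: False
        then have "\<exists>s t. (c, d) = comb 3 s t" using f4 by (intro main) simp_all
        then show ?thesis by (intro exI[of _ 3]) simp
      qed
    qed
  qed
qed


definition Bb :: int where "Bb = int pp - int q"

lemma inv_mono_SG: "inv_mono pp Bb e \<longleftrightarrow> SG e"
proof -
  have "int (fst e) + Bb * int (snd e) = (int (fst e) - int q * int (snd e)) + int pp * int (snd e)"
    by (simp add: Bb_def algebra_simps)
  then show ?thesis unfolding inv_mono_def SG_def
    by (simp only: mod_eq_0_iff_dvd) (metis dvd_add_left_iff dvd_triv_left)
qed

lemma SG_comb: "i < 4 \<Longrightarrow> SG (comb i s t)"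
proof -
  assume i: "i < 4"
  have h1: "int pp dvd (int (fst (z i)) - int q * int (snd (z i)))" using SG_z[of i] i by (simp add: SG_def)
  have h2: "int pp dvd (int (fst (z (Suc i))) - int q * int (snd (z (Suc i))))" using SG_z[of "Suc i"] i by (simp add: SG_def)
  have "int (fst (comb i s t)) - int q * int (snd (comb i s t)) =
     int s * (int (fst (z i)) - int q * int (snd (z i))) + int t * (int (fst (z (Suc i))) - int q * int (snd (z (Suc i))))"
    by (simp add: comb_def algebra_simps)
  then show ?thesis unfolding SG_def using h1 h2 by (simp add: dvd_add)
qed

definition Lc :: "nat \<Rightarrow> nat" where
  "Lc j = (if j = 0 then 1 else if j = 1 then 1 else if j = 2 then a+2 else if j = 3 then a+2 else pp)"
definition Ld :: "nat \<Rightarrow> nat" where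
  "Ld j = (if j = 0 then pp else if j = 1 then k+2 else if j = 2 then k+1 else if j = 3 then 1 else 1)"
definition L :: "nat \<Rightarrow> nat \<times> nat \<Rightarrow> nat" where
  "L j e = Lc j * fst e + Ld j * snd e"

lemma L_z_ge: "j \<le> 4 \<Longrightarrow> i \<le> 4 \<Longrightarrow> L j (z j) \<le> L j (z i)"
proof -
  assume j: "j \<le> 4" and i: "i \<le> 4"
  show ?thesis using le4_cases[OF j] le4_cases[OF i]
    by (auto simp: L_def Lc_def Ld_def pp_def algebra_simps)
qed

lemma L_z_pos: "j \<le> 4 \<Longrightarrow> L j (z j) > 0"
  using le4_cases[of j] by (auto simp: L_def Lc_def Ld_def pp_def)

lemma z_nonzero: "i \<le> 4 \<Longrightarrow> fst (z i) + snd (z i) > 0"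
  using le4_cases[of i] by (auto simp: pp_def)

lemma L_comb: "L j (comb i s t) = s * L j (z i) + t * L j (z (Suc i))"
  by (simp add: L_def comb_def algebra_simps)

lemma L_SG_ge:
  assumes j: "j \<le> 4" and e: "SG e" "e \<noteq> (0,0)"
  shows "L j (z j) \<le> L j e"
proof -
  obtain i s t where i: "i < 4" and est: "e = comb i s t"
    using cone_decomp[of "fst e" "snd e"] e by auto
  have "s + t \<ge> 1"
  proof (rule ccontr)
    assume "\<not> s + t \<ge> 1"
    then have "s = 0" "t = 0" by auto
    then show False using e est by (simp add: comb_def)
  qed
  have "L j (z j) \<le> (s + t) * L j (z j)" using \<open>s + t \<ge> 1\<close> by simp
  also have "\<dots> = s * L j (z j) + t * L j (z j)" by (simp add: algebra_simps)
  also have "\<dots> \<le> s * L j (z i) + t * L j (z (Suc i))"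
    using L_z_ge[OF j, of i] L_z_ge[OF j, of "Suc i"] i by (intro add_mono mult_le_mono2) simp_all
  finally show ?thesis by (simp add: est L_comb)
qed

lemma comb_nonzero:
  assumes i: "i < 4" and st: "s + t \<ge> 1"
  shows "comb i s t \<noteq> (0,0)"
proof
  assume c: "comb i s t = (0, 0)"
  have e: "fst (comb i s t) + snd (comb i s t) = s*(fst (z i) + snd (z i)) + t*(fst (z (Suc i)) + snd (z (Suc i)))"
    by (simp add: comb_def algebra_simps)
  have "0 < fst (z i) + snd (z i)" using i by (intro z_nonzero) simp
  then have "1 \<le> fst (z i) + snd (z i)" by linarith
  then have "s * 1 \<le> s*(fst (z i) + snd (z i))" by (rule mult_le_mono2)
  moreover have "0 < fst (z (Suc i)) + snd (z (Suc i))" using i by (intro z_nonzero) simp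
  then have "1 \<le> fst (z (Suc i)) + snd (z (Suc i))" by linarith
  then have "t * 1 \<le> t*(fst (z (Suc i)) + snd (z (Suc i)))" by (rule mult_le_mono2)
  ultimately have "fst (comb i s t) + snd (comb i s t) \<ge> 1" using st e by linarith
  then show False using c by simp
qed

lemma comb_split: "comb i (s1 + s2) (t1 + t2) = (fst (comb i s1 t1) + fst (comb i s2 t2), snd (comb i s1 t1) + snd (comb i s2 t2))"
  by (simp add: comb_def algebra_simps)

lemma comb_10: "comb i 1 0 = z i" by (simp add: comb_def)
lemma comb_01: "comb i 0 1 = z (Suc i)" by (simp add: comb_def)

definition decomp :: "nat \<times> nat \<Rightarrow> bool" where
  "decomp e = (\<exists>e1 e2. inv_mono pp Bb e1 \<and> inv_mono pp Bb e2 \<and> e1 \<noteq> (0,0) \<and> e2 \<noteq> (0,0) \<and>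
              fst e = fst e1 + fst e2 \<and> snd e = snd e1 + snd e2)"

lemma inv_gens_eq: "inv_gens pp Bb = {z 0, z 1, z 2, z 3, z 4}"
proof
  show "inv_gens pp Bb \<subseteq> {z 0, z 1, z 2, z 3, z 4}"
  proof
    fix e assume "e \<in> inv_gens pp Bb"
    then have inv: "SG e" and nz: "e \<noteq> (0,0)" and nd: "\<not> decomp e"
      unfolding inv_gens_def decomp_def by (auto simp: inv_mono_SG)
    obtain i s t where i: "i < 4" and est: "e = comb i s t"
      using cone_decomp[of "fst e" "snd e"] inv by auto
    have st: "s + t \<ge> 1" using nz est by (auto simp: comb_def)
    have split: "decomp e" if "s1 + s2 = s" "t1 + t2 = t" "s1 + t1 \<ge> 1" "s2 + t2 \<ge> 1" for s1 s2 t1 t2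
      unfolding decomp_def
      apply (rule exI[of _ "comb i s1 t1"], rule exI[of _ "comb i s2 t2"])
      using that comb_nonzero[OF i] SG_comb[OF i] est comb_split[of i s1 s2 t1 t2]
      by (auto simp: inv_mono_SG)
    have "(s = 1 \<and> t = 0) \<or> (s = 0 \<and> t = 1)"
    proof (rule ccontr)
      assume h: "\<not> ?thesis"
      then consider "s \<ge> 1" "t \<ge> 1" | "s \<ge> 2" | "t \<ge> 2" using st by linarith
      then show False
      proof cases
        case 1
        have "decomp e" by (rule split[of 1 "s-1" 0 t]) (use 1 in linarith)+
        with nd show False by simp
      next
        case 2
        have "decomp e" by (rule split[of 1 "s-1" 0 t]) (use 2 in linarith)+
        with nd show False by simp
      next
        case 3
        have "decomp e" by (rule split[of 0 s 1 "t-1"]) (use 3 in linarith)+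
        with nd show False by simp
      qed
    qed
    then have "e = z i \<or> e = z (Suc i)" using est comb_10 comb_01 by auto
    then show "e \<in> {z 0, z 1, z 2, z 3, z 4}" using lt4_cases[OF i]
      by (auto simp: numeral_2_eq_2 numeral_3_eq_3 eval_nat_numeral)
  qed
next
  show "{z 0, z 1, z 2, z 3, z 4} \<subseteq> inv_gens pp Bb"
  proof -
    have zin: "z j \<in> inv_gens pp Bb" if j: "j \<le> 4" for j
    proof -
      have nz: "z j \<noteq> (0,0)" using z_nonzero[OF j] by auto
      have "\<not> decomp (z j)"
      proof
        assume "decomp (z j)"
        then obtain e1 e2 where e: "SG e1" "SG e2" "e1 \<noteq> (0,0)" "e2 \<noteq> (0,0)"
          "fst (z j) = fst e1 + fst e2" "snd (z j) = snd e1 + snd e2"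
          unfolding decomp_def inv_mono_SG by blast
        have "L j (z j) = L j e1 + L j e2" using e(5,6) by (simp add: L_def algebra_simps)
        moreover have "L j (z j) \<le> L j e1" by (rule L_SG_ge[OF j e(1,3)])
        moreover have "L j (z j) \<le> L j e2" by (rule L_SG_ge[OF j e(2,4)])
        ultimately show False using L_z_pos[OF j] by linarith
      qed
      then show ?thesis using SG_z[OF j] nz unfolding inv_gens_def decomp_def inv_mono_SG by blast
    qed
    show ?thesis unfolding insert_subset
      by (intro conjI empty_subsetI; rule zin; simp)
  qed
qed

lemma z_distinct_card: "card {z 0, z 1, z 2, z 3, z 4} = 5"
  by (simp add: pp_def)

lemma inv_list_eq: "inv_list pp Bb = [z 0, z 1, z 2, z 3, z 4]"
proof -
  have "sorted_list_of_set {z 0, z 1, z 2, z 3, z 4} = [z 4, z 3, z 2, z 1, z 0]"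
    by (subst sorted_list_of_set_unique[symmetric]) (auto simp: pp_def)
  then show ?thesis unfolding inv_list_def inv_gens_eq by simp
qed

end


definition X :: "(nat \<Rightarrow>\<^sub>0 nat) \<Rightarrow> cpoly" where "X m = Poly_Mapping.single m 1"

lemma X_mult: "X m * X n = X (m + n)" by (simp add: X_def mult_single)
lemma X_zero: "X 0 = 1" by (simp add: X_def)
lemma Var_X: "Var i = X (Poly_Mapping.single i 1)" by (simp add: Var_def X_def)

lemma Var_pow: "Var i ^ n = X (Poly_Mapping.single i n)"
proof (induction n)
  case 0 then show ?case by (simp add: X_zero)
next
  case (Suc n)
  have "Poly_Mapping.single i (Suc n) = Poly_Mapping.single i 1 + Poly_Mapping.single i n"
    by (simp flip: single_add)
  then show ?case using Suc by (simp add: Var_X X_mult)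
qed

lemma X_inj: "X m = X n \<longleftrightarrow> m = n"
proof
  assume "X m = X n"
  then have "Poly_Mapping.lookup (X m) m = Poly_Mapping.lookup (X n) m" by simp
  then show "m = n" unfolding X_def by (metis lookup_single_not_eq lookup_single_eq one_neq_zero)
qed simp

definition lin :: "(nat \<Rightarrow> nat) \<Rightarrow> (nat \<Rightarrow>\<^sub>0 nat) \<Rightarrow> nat" where
  "lin f m = (\<Sum>i<5. Poly_Mapping.lookup m i * f i)"

lemma five: "{..<5::nat} = {0,1,2,3,4}" by auto

lemma lin_expand: "lin f m = Poly_Mapping.lookup m 0 * f 0 + Poly_Mapping.lookup m 1 * f 1 +
   Poly_Mapping.lookup m 2 * f 2 + Poly_Mapping.lookup m 3 * f 3 + Poly_Mapping.lookup m 4 * f 4"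
  by (simp add: lin_def five)

lemma lin_add: "lin f (m + n) = lin f m + lin f n"
  by (simp add: lin_def lookup_add sum.distrib algebra_simps)

lemma lin_single: "j < 5 \<Longrightarrow> lin f (Poly_Mapping.single j s) = s * f j"
proof -
  assume j: "j < 5"
  have "lin f (Poly_Mapping.single j s) = (\<Sum>i<5. if i = j then s * f j else 0)"
    unfolding lin_def by (rule sum.cong) (auto simp: lookup_single when_def)
  also have "\<dots> = s * f j" using j by simp
  finally show ?thesis .
qed

definition keys5 :: "(nat \<Rightarrow>\<^sub>0 nat) \<Rightarrow> bool" where
  "keys5 m = (Poly_Mapping.keys m \<subseteq> {..<5})"

lemma keys5_add: "keys5 m \<Longrightarrow> keys5 n \<Longrightarrow> keys5 (m + n)"
  unfolding keys5_def using keys_add[of m n] by blast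

lemma keys5_single: "j < 5 \<Longrightarrow> keys5 (Poly_Mapping.single j s)"
  unfolding keys5_def by simp

lemma keys5_lookup: "keys5 m \<Longrightarrow> j \<ge> 5 \<Longrightarrow> Poly_Mapping.lookup m j = 0"
  unfolding keys5_def by (auto simp: in_keys_iff)

context cfg
begin

definition W :: "nat \<Rightarrow> cpoly" where
  "W i = Var 0 ^ fst (z i) * Var 1 ^ snd (z i)"

definition Ex1 where "Ex1 = lin (\<lambda>i. fst (z i))"
definition Ex2 where "Ex2 = lin (\<lambda>i. snd (z i))"

lemma eval_X:
  assumes "keys5 m"
  shows "eval_poly W (X m) = Var 0 ^ Ex1 m * Var 1 ^ Ex2 m"
proof -
  have "eval_poly W (X m) = (\<Prod>i<5. W i ^ Poly_Mapping.lookup m i)"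
    unfolding X_def eval_single using assms unfolding keys5_def
    by (simp add: Mon_superset)
  also have "\<dots> = W 0 ^ Poly_Mapping.lookup m 0 * W 1 ^ Poly_Mapping.lookup m 1 * W 2 ^ Poly_Mapping.lookup m 2
     * W 3 ^ Poly_Mapping.lookup m 3 * W 4 ^ Poly_Mapping.lookup m 4"
    by (simp add: five mult_ac)
  also have "\<dots> = Var 0 ^ Ex1 m * Var 1 ^ Ex2 m"
    unfolding W_def Ex1_def Ex2_def lin_expand
    by (simp only: power_mult_distrib power_add power_mult[symmetric] mult_ac)
  finally show ?thesis .
qed

lemma Y_inj: "(Var 0 ^ c * Var 1 ^ d :: cpoly) = Var 0 ^ c' * Var 1 ^ d' \<longleftrightarrow> c = c' \<and> d = d'"
proof -
  have "Var 0 ^ c * Var 1 ^ d = X (Poly_Mapping.single 0 c + Poly_Mapping.single 1 d)" for c d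
    by (simp add: Var_pow X_mult)
  moreover have "Poly_Mapping.single 0 c + Poly_Mapping.single 1 d = Poly_Mapping.single 0 c' + Poly_Mapping.single (1::nat) d'
     \<longleftrightarrow> c = c' \<and> d = d'"
  proof
    assume h: "Poly_Mapping.single 0 c + Poly_Mapping.single 1 d = Poly_Mapping.single 0 c' + Poly_Mapping.single (1::nat) d'"
    have "c = c'" using arg_cong[OF h, of "\<lambda>m. Poly_Mapping.lookup m 0"] by (simp add: lookup_add lookup_single)
    moreover have "d = d'" using arg_cong[OF h, of "\<lambda>m. Poly_Mapping.lookup m 1"] by (simp add: lookup_add lookup_single)
    ultimately show "c = c' \<and> d = d'" ..
  qed simp
  ultimately show ?thesis by (simp add: X_inj)
qed


definition D :: "nat \<Rightarrow> nat \<Rightarrow> int" where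
  "D r l = int (fst (z r)) * int (snd (z l)) - int (snd (z r)) * int (fst (z l))"

lemma D_vals: "D 0 1 = int pp" "D 0 2 = int pp * (int a + 3)" "D 0 3 = int pp * (2 * int a + 5)"
  "D 0 4 = int pp * int pp" "D 1 2 = int pp" "D 1 3 = 2 * int pp" "D 1 4 = (2 * int k + 3) * int pp"
  "D 2 3 = int pp" "D 2 4 = (int k + 2) * int pp" "D 3 4 = int pp"
  by (simp_all add: D_def pp_def algebra_simps)

lemma D_pos: "r < l \<Longrightarrow> l \<le> 4 \<Longrightarrow> D r l > 0"
proof -
  assume kl: "r < l" "l \<le> 4"
  have p: "int pp > 0" using pp_pos by simp
  have l: "l = 1 \<or> l = 2 \<or> l = 3 \<or> l = 4" using kl by linarith
  have r: "r = 0 \<or> r = 1 \<or> r = 2 \<or> r = 3" using kl by linarith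
  show ?thesis using l r kl p
    by (elim disjE; simp only: D_vals; simp)
qed

lemma D_self: "D r r = 0" by (simp add: D_def)
lemma D_anti: "D l r = - D r l" by (simp add: D_def algebra_simps)

lemma D_comb: "int (fst (z r)) * int (snd (comb i s t)) - int (snd (z r)) * int (fst (comb i s t))
   = int s * D r i + int t * D r (Suc i)"
  by (simp add: comb_def D_def algebra_simps)

definition cone :: "nat \<Rightarrow> nat \<Rightarrow> nat \<Rightarrow> (nat \<Rightarrow>\<^sub>0 nat)" where
  "cone i s t = Poly_Mapping.single i s + Poly_Mapping.single (Suc i) t"

lemma cone_inj_le:
  assumes ij: "i \<le> j" "j < 4" and eq: "comb i s t = comb j s' t'"
  shows "cone i s t = cone j s' t'"
proof -
  have F: "int s * D r i + int t * D r (Suc i) = int s' * D r j + int t' * D r (Suc j)" for r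
    using D_comb[of r i s t] D_comb[of r j s' t'] eq by simp
  show ?thesis
  proof (cases "i = j")
    case True
    have "int t * D i (Suc i) = int t' * D i (Suc i)" using F[of i] True by (simp add: D_self)
    then have "t = t'" using D_pos[of i "Suc i"] ij True by simp
    moreover have e2: "int s * D (Suc i) i = int s' * D (Suc i) i" using F[of "Suc i"] True by (simp add: D_self)
    have nz: "D (Suc i) i \<noteq> 0" using D_anti[of "Suc i" i] D_pos[of i "Suc i"] ij True by simp
    have "s = s'" using e2 nz by simp
    ultimately show ?thesis using True by simp
  next
    case False
    then have ij': "Suc i \<le> j" using ij by simp
    have P1: "D i (Suc i) > 0" using D_pos[of i "Suc i"] ij by simp
    have Q1: "D (Suc i) j \<ge> 0"
      using D_pos[of "Suc i" j] ij' ij by (cases "Suc i = j") (simp_all add: D_self)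
    have Q2: "D (Suc i) (Suc j) > 0" using D_pos[of "Suc i" "Suc j"] ij' ij by simp
    have "int s * D i (Suc i) + int s' * D (Suc i) j + int t' * D (Suc i) (Suc j) = 0"
      using F[of "Suc i"] by (simp add: D_self D_anti[of "Suc i" i])
    moreover have "int s * D i (Suc i) \<ge> 0" "int s' * D (Suc i) j \<ge> 0" "int t' * D (Suc i) (Suc j) \<ge> 0"
      using P1 Q1 Q2 by simp_all
    ultimately have z1: "int s * D i (Suc i) = 0" and z2: "int s' * D (Suc i) j = 0" and z3: "int t' * D (Suc i) (Suc j) = 0"
      by linarith+
    have s0: "s = 0" using z1 P1 by simp
    have t0: "t' = 0" using z3 Q2 by simp
    have eq2: "comb i 0 t = comb j s' 0" using eq s0 t0 by simp
    have nz: "fst (z (Suc i)) + snd (z (Suc i)) > 0" using ij by (intro z_nonzero) simp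
    show ?thesis
    proof (cases "j = Suc i")
      case True
      have h: "t * fst (z (Suc i)) = s' * fst (z (Suc i))" "t * snd (z (Suc i)) = s' * snd (z (Suc i))"
        using eq2 True by (simp_all add: comb_def)
      then have "t * (fst (z (Suc i)) + snd (z (Suc i))) = s' * (fst (z (Suc i)) + snd (z (Suc i)))"
        by (simp only: add_mult_distrib2 h)
      then have "t = s'" using nz by (metis mult_right_cancel not_less_zero)
      then show ?thesis using True s0 t0 by (simp add: cone_def)
    next
      case False
      then have "D (Suc i) j > 0" using D_pos[of "Suc i" j] ij' ij by simp
      then have "s' = 0" using z2 by simp
      then have h: "t * fst (z (Suc i)) = 0" "t * snd (z (Suc i)) = 0"
        using eq2 by (simp_all add: comb_def)
      then have "t * (fst (z (Suc i)) + snd (z (Suc i))) = 0"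
        by (simp only: add_mult_distrib2 h add_0)
      then have "t = 0" using nz by (metis mult_is_0 not_less_zero)
      then show ?thesis using s0 t0 \<open>s' = 0\<close> by (simp add: cone_def)
    qed
  qed
qed

lemma cone_inj:
  assumes "i < 4" "j < 4" "comb i s t = comb j s' t'"
  shows "cone i s t = cone j s' t'"
proof (cases "i \<le> j")
  case True then show ?thesis using assms cone_inj_le by blast
next
  case False then show ?thesis using assms cone_inj_le[of j i s' t' s t] by simp
qed

lemma Ex_cone: "i < 4 \<Longrightarrow> Ex1 (cone i s t) = fst (comb i s t) \<and> Ex2 (cone i s t) = snd (comb i s t)"
  by (simp add: Ex1_def Ex2_def cone_def lin_add lin_single comb_def)

lemma keys5_cone: "i < 4 \<Longrightarrow> keys5 (cone i s t)"
  unfolding cone_def by (intro keys5_add keys5_single) simp_all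

lemma cone_inj_Ex:
  assumes "i < 4" "j < 4" "Ex1 (cone i s t) = Ex1 (cone j s' t')" "Ex2 (cone i s t) = Ex2 (cone j s' t')"
  shows "cone i s t = cone j s' t'"
  using assms Ex_cone[of i s t] Ex_cone[of j s' t'] by (intro cone_inj) (auto simp: prod_eq_iff)

end


definition Gst :: "nat \<Rightarrow> nat \<Rightarrow> cpoly set" where
  "Gst al be = { Var 2 ^ 2 - Var 1 * Var 3,
         Var 1 ^ (al - 1) * Var 2 - Var 0 * Var 3,
         Var 3 ^ be - Var 2 * Var 4,
         Var 1 ^ al - Var 0 * Var 2,
         Var 2 * Var 3 ^ (be - 1) - Var 1 * Var 4,
         Var 1 ^ (al - 1) * Var 3 ^ (be - 1) - Var 0 * Var 4 }"

lemma finite_Gst: "finite (Gst al be)" by (simp add: Gst_def)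

abbreviation sg :: "nat \<Rightarrow> nat \<Rightarrow> (nat \<Rightarrow>\<^sub>0 nat)" where "sg \<equiv> Poly_Mapping.single"

context cfg
begin

definition II where "II = ideal_in 5 (Gst (a+3) (k+2))"

definition wt :: "nat \<Rightarrow> nat" where
  "wt i = (if i = 0 then 2*a+6 else if i = 1 then 2 else if i = 2 then 1 else if i = 3 then 2 else 2*k+4)"

definition rule :: "(nat \<Rightarrow>\<^sub>0 nat) \<Rightarrow> (nat \<Rightarrow>\<^sub>0 nat) \<Rightarrow> bool" where
  "rule u v = (keys5 u \<and> keys5 v \<and> Ex1 u = Ex1 v \<and> Ex2 u = Ex2 v \<and> lin wt v < lin wt u)"

lemmas lin_simps = Ex1_def Ex2_def lin_add lin_single keys5_add keys5_single

lemma R1: "rule (sg 1 1 + sg 3 1) (sg 2 2)"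
  by (simp add: rule_def lin_simps wt_def)
lemma R2: "rule (sg 0 1 + sg 3 1) (sg 1 (a+2) + sg 2 1)"
  by (simp add: rule_def lin_simps wt_def pp_def algebra_simps)
lemma R3: "rule (sg 2 1 + sg 4 1) (sg 3 (k+2))"
  by (simp add: rule_def lin_simps wt_def pp_def algebra_simps)
lemma R4: "rule (sg 0 1 + sg 2 1) (sg 1 (a+3))"
  by (simp add: rule_def lin_simps wt_def pp_def algebra_simps)
lemma R5: "rule (sg 1 1 + sg 4 1) (sg 2 1 + sg 3 (k+1))"
  by (simp add: rule_def lin_simps wt_def pp_def algebra_simps)
lemma R6: "rule (sg 0 1 + sg 4 1) (sg 1 (a+2) + sg 3 (k+1))"
  by (simp add: rule_def lin_simps wt_def pp_def algebra_simps)

lemma Gst_forms: "Gst (a+3) (k+2) = {X (sg 2 2) - X (sg 1 1 + sg 3 1),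
   X (sg 1 (a+2) + sg 2 1) - X (sg 0 1 + sg 3 1),
   X (sg 3 (k+2)) - X (sg 2 1 + sg 4 1),
   X (sg 1 (a+3)) - X (sg 0 1 + sg 2 1),
   X (sg 2 1 + sg 3 (k+1)) - X (sg 1 1 + sg 4 1),
   X (sg 1 (a+2) + sg 3 (k+1)) - X (sg 0 1 + sg 4 1)}"
  unfolding Gst_def by (simp add: X_mult[symmetric] Var_pow[symmetric])

lemma Gst_rule: "g \<in> Gst (a+3) (k+2) \<Longrightarrow> \<exists>u v. rule u v \<and> g = X v - X u"
  unfolding Gst_forms using R1 R2 R3 R4 R5 R6 by blast

lemma rule_mem: "rule u v \<Longrightarrow> X v - X u \<in> Gst (a+3) (k+2) \<Longrightarrow> X v - X u \<in> II"
  unfolding II_def by (rule ideal_gen[OF finite_Gst])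

lemma R_mem: "X (sg 2 2) - X (sg 1 1 + sg 3 1) \<in> II"
   "X (sg 1 (a+2) + sg 2 1) - X (sg 0 1 + sg 3 1) \<in> II"
   "X (sg 3 (k+2)) - X (sg 2 1 + sg 4 1) \<in> II"
   "X (sg 1 (a+3)) - X (sg 0 1 + sg 2 1) \<in> II"
   "X (sg 2 1 + sg 3 (k+1)) - X (sg 1 1 + sg 4 1) \<in> II"
   "X (sg 1 (a+2) + sg 3 (k+1)) - X (sg 0 1 + sg 4 1) \<in> II"
  unfolding II_def Gst_forms by (auto intro: ideal_gen)

lemma gen_eval: "g \<in> Gst (a+3) (k+2) \<Longrightarrow> eval_poly W g = 0"
  using Gst_rule[of g] by (auto simp: rule_def eval_diff eval_X)

lemma in_vars_X: "keys5 m \<Longrightarrow> in_vars 5 (X m)"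
  unfolding X_def keys5_def by (rule in_vars_single)

lemma gen_in_vars: "g \<in> Gst (a+3) (k+2) \<Longrightarrow> in_vars 5 g"
  using Gst_rule[of g] by (auto simp: rule_def intro!: in_vars_diff in_vars_X)


lemma II_add: "P \<in> II \<Longrightarrow> Q \<in> II \<Longrightarrow> P + Q \<in> II" unfolding II_def by (rule ideal_add)
lemma II_diff: "P \<in> II \<Longrightarrow> Q \<in> II \<Longrightarrow> P - Q \<in> II" unfolding II_def by (rule ideal_diff)
lemma II_uminus: "P \<in> II \<Longrightarrow> - P \<in> II" unfolding II_def by (rule ideal_uminus)
lemma II_mult: "P \<in> II \<Longrightarrow> in_vars 5 R \<Longrightarrow> R * P \<in> II" unfolding II_def by (rule ideal_mult)
lemma II_zero: "0 \<in> II" unfolding II_def by (rule ideal_zero)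
lemma II_sum: "(\<And>x. x \<in> A \<Longrightarrow> g x \<in> II) \<Longrightarrow> (\<Sum>x\<in>A. g x) \<in> II" unfolding II_def by (rule ideal_sum)

lemma Ex1_add: "Ex1 (m + n) = Ex1 m + Ex1 n" by (simp add: Ex1_def lin_add)
lemma Ex2_add: "Ex2 (m + n) = Ex2 m + Ex2 n" by (simp add: Ex2_def lin_add)

definition red :: "(nat \<Rightarrow>\<^sub>0 nat) \<Rightarrow> bool" where
  "red m = (\<exists>i<4. \<exists>s t. Ex1 (cone i s t) = Ex1 m \<and> Ex2 (cone i s t) = Ex2 m \<and> X m - X (cone i s t) \<in> II)"

lemma red_step:
  assumes m: "keys5 m" and r: "rule u v" and mem: "X v - X u \<in> II"
    and le: "\<And>j. Poly_Mapping.lookup u j \<le> Poly_Mapping.lookup m j"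
    and IH: "\<And>m'. lin wt m' < lin wt m \<Longrightarrow> keys5 m' \<Longrightarrow> red m'"
  shows "red m"
proof -
  define m' where "m' = m - u"
  have mm: "m = m' + u"
    by (rule poly_mapping_eqI) (simp add: m'_def lookup_add lookup_minus le)
  have k': "keys5 m'"
    unfolding keys5_def
  proof
    fix j assume "j \<in> Poly_Mapping.keys m'"
    then have "Poly_Mapping.lookup m j \<noteq> 0" by (simp add: m'_def lookup_minus in_keys_iff)
    then have "j \<in> Poly_Mapping.keys m" by (simp add: in_keys_iff)
    then show "j \<in> {..<5}" using m unfolding keys5_def by blast
  qed
  define m'' where "m'' = m' + v"
  have k'': "keys5 m''" unfolding m''_def using k' r by (simp add: rule_def keys5_add)
  have lt: "lin wt m'' < lin wt m" using r unfolding m''_def rule_def by (subst mm) (simp add: lin_add)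
  obtain i s t where i: "i < 4" and c1: "Ex1 (cone i s t) = Ex1 m''" and c2: "Ex2 (cone i s t) = Ex2 m''"
     and cm: "X m'' - X (cone i s t) \<in> II"
    using IH[OF lt k''] unfolding red_def by blast
  have e1: "Ex1 m'' = Ex1 m" using r unfolding m''_def rule_def by (subst mm) (simp add: Ex1_add)
  have e2: "Ex2 m'' = Ex2 m" using r unfolding m''_def rule_def by (subst mm) (simp add: Ex2_add)
  have "X m - X m'' = - (X m' * (X v - X u))"
    by (simp add: mm m''_def X_mult[symmetric] algebra_simps)
  moreover have "- (X m' * (X v - X u)) \<in> II"
    by (intro II_uminus II_mult mem in_vars_X k')
  ultimately have "X m - X m'' \<in> II" by simp
  then have "(X m - X m'') + (X m'' - X (cone i s t)) \<in> II" using cm by (rule II_add)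
  then have "X m - X (cone i s t) \<in> II" by simp
  then show ?thesis unfolding red_def using i c1 c2 e1 e2 by auto
qed

lemma red_cone: "i < 4 \<Longrightarrow> m = cone i s t \<Longrightarrow> red m"
  unfolding red_def using II_zero by (intro exI[of _ i] conjI exI[of _ s] exI[of _ t]) auto

lemma m_expand: "keys5 m \<Longrightarrow> m = sg 0 (Poly_Mapping.lookup m 0) + sg 1 (Poly_Mapping.lookup m 1)
   + sg 2 (Poly_Mapping.lookup m 2) + sg 3 (Poly_Mapping.lookup m 3) + sg 4 (Poly_Mapping.lookup m 4)"
proof (rule poly_mapping_eqI)
  fix j assume m: "keys5 m"
  show "Poly_Mapping.lookup m j = Poly_Mapping.lookup (sg 0 (Poly_Mapping.lookup m 0) + sg 1 (Poly_Mapping.lookup m 1)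
   + sg 2 (Poly_Mapping.lookup m 2) + sg 3 (Poly_Mapping.lookup m 3) + sg 4 (Poly_Mapping.lookup m 4)) j"
  proof (cases "j < 5")
    case True
    then have "j = 0 \<or> j = 1 \<or> j = 2 \<or> j = 3 \<or> j = 4" by auto
    then show ?thesis by (elim disjE) (simp_all add: lookup_add lookup_single)
  next
    case False
    then show ?thesis using keys5_lookup[OF m, of j] by (simp add: lookup_add lookup_single when_def)
  qed
qed

lemma red_base:
  assumes m: "keys5 m"
    and n1: "\<not> (Poly_Mapping.lookup m 1 \<ge> 1 \<and> Poly_Mapping.lookup m 3 \<ge> 1)"
    and n2: "\<not> (Poly_Mapping.lookup m 0 \<ge> 1 \<and> Poly_Mapping.lookup m 3 \<ge> 1)"
    and n3: "\<not> (Poly_Mapping.lookup m 2 \<ge> 1 \<and> Poly_Mapping.lookup m 4 \<ge> 1)"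
    and n4: "\<not> (Poly_Mapping.lookup m 0 \<ge> 1 \<and> Poly_Mapping.lookup m 2 \<ge> 1)"
    and n5: "\<not> (Poly_Mapping.lookup m 1 \<ge> 1 \<and> Poly_Mapping.lookup m 4 \<ge> 1)"
    and n6: "\<not> (Poly_Mapping.lookup m 0 \<ge> 1 \<and> Poly_Mapping.lookup m 4 \<ge> 1)"
  shows "red m"
proof -
  note me = m_expand[OF m]
  show ?thesis
  proof (cases "Poly_Mapping.lookup m 0 \<ge> 1")
    case c0: True
    then have "Poly_Mapping.lookup m 2 = 0" "Poly_Mapping.lookup m 3 = 0" "Poly_Mapping.lookup m 4 = 0"
      using n2 n4 n6 by auto
    then have "m = cone 0 (Poly_Mapping.lookup m 0) (Poly_Mapping.lookup m 1)"
      using me by (simp add: cone_def)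
    then show ?thesis by (rule red_cone[rotated]) simp
  next
    case c0: False
    show ?thesis
    proof (cases "Poly_Mapping.lookup m 1 \<ge> 1")
      case c1: True
      then have "Poly_Mapping.lookup m 0 = 0" "Poly_Mapping.lookup m 3 = 0" "Poly_Mapping.lookup m 4 = 0"
        using c0 n1 n5 by auto
      then have "m = cone 1 (Poly_Mapping.lookup m 1) (Poly_Mapping.lookup m 2)"
        using me by (simp add: cone_def numeral_2_eq_2)
      then show ?thesis by (rule red_cone[rotated]) simp
    next
      case c1: False
      show ?thesis
      proof (cases "Poly_Mapping.lookup m 2 \<ge> 1")
        case c2: True
        then have "Poly_Mapping.lookup m 0 = 0" "Poly_Mapping.lookup m 1 = 0" "Poly_Mapping.lookup m 4 = 0"
          using c0 c1 n3 by auto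
        then have "m = cone 2 (Poly_Mapping.lookup m 2) (Poly_Mapping.lookup m 3)"
          using me by (simp add: cone_def numeral_3_eq_3)
        then show ?thesis by (rule red_cone[rotated]) simp
      next
        case c2: False
        then have "Poly_Mapping.lookup m 0 = 0" "Poly_Mapping.lookup m 1 = 0" "Poly_Mapping.lookup m 2 = 0"
          using c0 c1 by auto
        then have "m = cone 3 (Poly_Mapping.lookup m 3) (Poly_Mapping.lookup m 4)"
          using me by (simp add: cone_def eval_nat_numeral)
        then show ?thesis by (rule red_cone[rotated]) simp
      qed
    qed
  qed
qed

lemma le_two:
  "Poly_Mapping.lookup m i \<ge> 1 \<Longrightarrow> Poly_Mapping.lookup m j \<ge> 1 \<Longrightarrow> i \<noteq> j \<Longrightarrow>
   Poly_Mapping.lookup (sg i 1 + sg j 1) r \<le> Poly_Mapping.lookup m r"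
  by (auto simp: lookup_add lookup_single when_def)

lemma reduce: "keys5 m \<Longrightarrow> red m"
proof (induction "lin wt m" arbitrary: m rule: less_induct)
  case less
  note IH = less(1)
  have IH': "\<And>m'. lin wt m' < lin wt m \<Longrightarrow> keys5 m' \<Longrightarrow> red m'" using IH by blast
  show ?case
  proof (cases "Poly_Mapping.lookup m 1 \<ge> 1 \<and> Poly_Mapping.lookup m 3 \<ge> 1")
    case True
    then show ?thesis by (intro red_step[OF less(2) R1 R_mem(1) _ IH'] le_two) auto
  next
    case n1: False
    show ?thesis
    proof (cases "Poly_Mapping.lookup m 0 \<ge> 1 \<and> Poly_Mapping.lookup m 3 \<ge> 1")
      case True
      then show ?thesis by (intro red_step[OF less(2) R2 R_mem(2) _ IH'] le_two) auto
    next
      case n2: False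
      show ?thesis
      proof (cases "Poly_Mapping.lookup m 2 \<ge> 1 \<and> Poly_Mapping.lookup m 4 \<ge> 1")
        case True
        then show ?thesis by (intro red_step[OF less(2) R3 R_mem(3) _ IH'] le_two) auto
      next
        case n3: False
        show ?thesis
        proof (cases "Poly_Mapping.lookup m 0 \<ge> 1 \<and> Poly_Mapping.lookup m 2 \<ge> 1")
          case True
          then show ?thesis by (intro red_step[OF less(2) R4 R_mem(4) _ IH'] le_two) auto
        next
          case n4: False
          show ?thesis
          proof (cases "Poly_Mapping.lookup m 1 \<ge> 1 \<and> Poly_Mapping.lookup m 4 \<ge> 1")
            case True
            then show ?thesis by (intro red_step[OF less(2) R5 R_mem(5) _ IH'] le_two) auto
          next
            case n5: False
            show ?thesis
            proof (cases "Poly_Mapping.lookup m 0 \<ge> 1 \<and> Poly_Mapping.lookup m 4 \<ge> 1")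
              case True
              then show ?thesis by (intro red_step[OF less(2) R6 R_mem(6) _ IH'] le_two) auto
            next
              case n6: False
              show ?thesis by (rule red_base[OF less(2) n1 n2 n3 n4 n5 n6])
            qed
          qed
        qed
      qed
    qed
  qed
qed


lemma II_sub_ker: "P \<in> II \<Longrightarrow> in_vars 5 P \<and> eval_poly W P = 0"
  unfolding II_def using ideal_in_vars[OF gen_in_vars] ideal_eval[OF gen_eval] by blast

definition E :: "(nat \<Rightarrow>\<^sub>0 nat) \<Rightarrow> (nat \<Rightarrow>\<^sub>0 nat)" where
  "E n = sg 0 (Ex1 n) + sg 1 (Ex2 n)"

lemma single_X: "Poly_Mapping.single n c = Cst c * X n"
  by (simp add: Cst_def X_def mult_single)

lemma eval_single_W: "keys5 n \<Longrightarrow> eval_poly W (Poly_Mapping.single n c) = Poly_Mapping.single (E n) c"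
proof -
  assume n: "keys5 n"
  have "eval_poly W (Poly_Mapping.single n c) = Cst c * (Var 0 ^ Ex1 n * Var 1 ^ Ex2 n)"
    by (simp add: single_X eval_mult eval_Cst eval_X[OF n])
  also have "\<dots> = Cst c * X (E n)" by (simp add: E_def Var_pow X_mult)
  also have "\<dots> = Poly_Mapping.single (E n) c" by (simp add: single_X)
  finally show ?thesis .
qed

lemma E_inj: "E n1 = E n2 \<Longrightarrow> Ex1 n1 = Ex1 n2 \<and> Ex2 n1 = Ex2 n2"
proof -
  assume h: "E n1 = E n2"
  have "Ex1 n1 = Ex1 n2" using arg_cong[OF h, of "\<lambda>m. Poly_Mapping.lookup m 0"] by (simp add: E_def lookup_add lookup_single)
  moreover have "Ex2 n1 = Ex2 n2" using arg_cong[OF h, of "\<lambda>m. Poly_Mapping.lookup m 1"] by (simp add: E_def lookup_add lookup_single)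
  ultimately show ?thesis ..
qed

lemma ker_sub:
  assumes P: "in_vars 5 P" and ev: "eval_poly W P = 0"
  shows "P \<in> II"
proof -
  have km: "keys5 m" if "m \<in> Poly_Mapping.keys P" for m using P that unfolding in_vars_def keys5_def by blast
  define good where "good m n = ((\<exists>i<4. \<exists>s t. n = cone i s t) \<and> Ex1 n = Ex1 m \<and> Ex2 n = Ex2 m \<and> X m - X n \<in> II)" for m n
  have ex: "\<exists>n. good m n" if mP: "m \<in> Poly_Mapping.keys P" for m
  proof -
    obtain i s t where "i < 4" "Ex1 (cone i s t) = Ex1 m" "Ex2 (cone i s t) = Ex2 m" "X m - X (cone i s t) \<in> II"
      using reduce[OF km[OF mP]] unfolding red_def by blast
    then show ?thesis unfolding good_def by blast
  qed
  define NF where "NF m = (SOME n. good m n)" for m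
  have NF: "good m (NF m)" if "m \<in> Poly_Mapping.keys P" for m
    unfolding NF_def by (rule someI_ex[OF ex[OF that]])
  have kNF: "keys5 (NF m)" if mP: "m \<in> Poly_Mapping.keys P" for m
  proof -
    obtain i s t where "i < 4" "NF m = cone i s t" using NF[OF mP] unfolding good_def by blast
    then show ?thesis using keys5_cone by simp
  qed
  define Q where "Q = (\<Sum>m\<in>Poly_Mapping.keys P. Poly_Mapping.single (NF m) (Poly_Mapping.lookup P m))"
  have "P - Q = (\<Sum>m\<in>Poly_Mapping.keys P. Poly_Mapping.single m (Poly_Mapping.lookup P m) - Poly_Mapping.single (NF m) (Poly_Mapping.lookup P m))"
    unfolding Q_def by (subst poly_expand[of P]) (simp add: sum_subtractf)
  also have "\<dots> = (\<Sum>m\<in>Poly_Mapping.keys P. Cst (Poly_Mapping.lookup P m) * (X m - X (NF m)))"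
    by (simp add: single_X algebra_simps)
  finally have PQ_eq: "P - Q = \<dots>" .
  have PQ: "P - Q \<in> II"
    unfolding PQ_eq
  proof (rule II_sum)
    fix m assume "m \<in> Poly_Mapping.keys P"
    then have "X m - X (NF m) \<in> II" using NF unfolding good_def by blast
    then show "Cst (Poly_Mapping.lookup P m) * (X m - X (NF m)) \<in> II" by (rule II_mult) simp
  qed
  have "eval_poly W (P - Q) = 0" using II_sub_ker[OF PQ] by blast
  then have evQ: "eval_poly W Q = 0" using ev by (simp add: eval_diff)
  have evQ2: "eval_poly W Q = (\<Sum>m\<in>Poly_Mapping.keys P. Poly_Mapping.single (E (NF m)) (Poly_Mapping.lookup P m))"
    unfolding Q_def eval_sum by (rule sum.cong) (simp_all add: eval_single_W kNF)
  have inj: "NF m1 = NF m2" if h: "m1 \<in> Poly_Mapping.keys P" "m2 \<in> Poly_Mapping.keys P" "E (NF m1) = E (NF m2)" for m1 m2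
  proof -
    obtain i1 s1 t1 where 1: "i1 < 4" "NF m1 = cone i1 s1 t1" using NF[OF h(1)] unfolding good_def by blast
    obtain i2 s2 t2 where 2: "i2 < 4" "NF m2 = cone i2 s2 t2" using NF[OF h(2)] unfolding good_def by blast
    show ?thesis using E_inj[OF h(3)] 1 2 cone_inj_Ex[of i1 i2 s1 t1 s2 t2] by simp
  qed
  have Q0: "Q = 0"
  proof (rule poly_mapping_eqI)
    fix n0
    have lQ: "Poly_Mapping.lookup Q n0 = (\<Sum>m\<in>Poly_Mapping.keys P. if NF m = n0 then Poly_Mapping.lookup P m else 0)"
      unfolding Q_def lookup_sum by (rule sum.cong) (auto simp: lookup_single when_def)
    show "Poly_Mapping.lookup Q n0 = Poly_Mapping.lookup 0 n0"
    proof (cases "\<exists>m1\<in>Poly_Mapping.keys P. NF m1 = n0")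
      case True
      then obtain m1 where m1: "m1 \<in> Poly_Mapping.keys P" "NF m1 = n0" by blast
      have "Poly_Mapping.lookup Q n0 = (\<Sum>m\<in>Poly_Mapping.keys P. if E (NF m) = E n0 then Poly_Mapping.lookup P m else 0)"
        unfolding lQ
      proof (rule sum.cong)
        fix m assume m: "m \<in> Poly_Mapping.keys P"
        have "NF m = n0 \<longleftrightarrow> E (NF m) = E n0" using inj[OF m m1(1)] m1(2) by auto
        then show "(if NF m = n0 then Poly_Mapping.lookup P m else 0) = (if E (NF m) = E n0 then Poly_Mapping.lookup P m else 0)"
          by simp
      qed simp
      also have "\<dots> = Poly_Mapping.lookup (eval_poly W Q) (E n0)"
        unfolding evQ2 lookup_sum by (rule sum.cong) (auto simp: lookup_single when_def)
      also have "\<dots> = 0" using evQ by simp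
      finally show ?thesis by simp
    next
      case False
      then show ?thesis unfolding lQ by (auto intro: sum.neutral)
    qed
  qed
  show ?thesis using PQ Q0 by simp
qed

lemma ker_eq: "{P. in_vars 5 P \<and> eval_poly W P = 0} = II"
  using ker_sub II_sub_ker by blast

end


lemma eval_cong_vars:
  assumes "in_vars n P" "\<And>i. i < n \<Longrightarrow> f i = g i"
  shows "eval_poly f P = eval_poly g P"
  unfolding eval_poly_def
proof (rule sum.cong[OF refl])
  fix m assume m: "m \<in> Poly_Mapping.keys P"
  have "(\<Prod>i\<in>Poly_Mapping.keys m. f i ^ Poly_Mapping.lookup m i) = (\<Prod>i\<in>Poly_Mapping.keys m. g i ^ Poly_Mapping.lookup m i)"
  proof (rule prod.cong[OF refl])
    fix i assume "i \<in> Poly_Mapping.keys m"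
    then have "i < n" using assms(1) m unfolding in_vars_def by blast
    then show "f i ^ Poly_Mapping.lookup m i = g i ^ Poly_Mapping.lookup m i" using assms(2) by simp
  qed
  then show "Cst (Poly_Mapping.lookup P m) * (\<Prod>i\<in>Poly_Mapping.keys m. f i ^ Poly_Mapping.lookup m i) =
        Cst (Poly_Mapping.lookup P m) * (\<Prod>i\<in>Poly_Mapping.keys m. g i ^ Poly_Mapping.lookup m i)" by simp
qed

lemma inv_modp_props:
  assumes p: "prime p" and b: "0 < b" "b < int p"
  shows "0 < inv_modp p b \<and> inv_modp p b < int p \<and> (b * inv_modp p b) mod int p = 1"
proof -
  let ?P = "int p"
  have pP: "prime ?P" using p by simp
  have P1: "?P > 1" using prime_gt_1_int[OF pP] .
  have ndvd: "\<not> ?P dvd b"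
  proof
    assume "?P dvd b"
    then have "?P \<le> b" using b(1) by (rule zdvd_imp_le)
    then show False using b(2) by simp
  qed
  have cop: "coprime b ?P" using prime_imp_coprime[OF pP ndvd] by (simp add: coprime_commute)
  obtain x where x: "[b * x = 1] (mod ?P)" using cong_solve_coprime_int[OF cop] by blast
  define c where "c = x mod ?P"
  have c1: "(b * c) mod ?P = 1"
    using x P1 unfolding c_def cong_def by (simp add: mod_mult_right_eq)
  have c0: "0 \<le> c" "c < ?P" using P1 unfolding c_def by simp_all
  have cnz: "c \<noteq> 0"
  proof
    assume "c = 0"
    then show False using c1 by simp
  qed
  let ?Q = "\<lambda>c. 0 < c \<and> c < ?P \<and> (b * c) mod ?P = 1"
  have ex: "?Q c" using c0 cnz c1 by simp
  have uniq: "c' = c" if "?Q c'" for c'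
  proof -
    have "(b * c') mod ?P = (b * c) mod ?P" using that c1 by simp
    then have "?P dvd b * c' - b * c" by (simp add: mod_eq_dvd_iff)
    then have "?P dvd b * (c' - c)" by (simp add: right_diff_distrib)
    then have d: "?P dvd (c' - c)" using prime_dvd_mult_iff[OF pP] ndvd by blast
    show ?thesis
    proof (rule ccontr)
      assume "c' \<noteq> c"
      then have "\<bar>?P\<bar> \<le> \<bar>c' - c\<bar>" using dvd_imp_le_int[of "c' - c" ?P] d by simp
      then show False using that c0 by linarith
    qed
  qed
  have "?Q (inv_modp p b)" unfolding inv_modp_def by (rule theI[of ?Q c, OF ex uniq])
  then show ?thesis by blast
qed

theorem proposition5p5:
  fixes p :: nat and b :: int
  assumes "prime p"
    and "(real p - 1) / 2 < real_of_int b" and "b < int p"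
    and "(int p - b) * (int p - inv_modp p b) = 2 * int p + 1"
  shows "card (inv_gens p b) = 5 \<and>
    (let \<alpha> = nat ((int p - inv_modp p b + 1) div 2); \<beta> = nat ((int p - b + 1) div 2) in
     ker_phi p b = ideal_in 5
       { Var 2 ^ 2 - Var 1 * Var 3,
         Var 1 ^ (\<alpha> - 1) * Var 2 - Var 0 * Var 3,
         Var 3 ^ \<beta> - Var 2 * Var 4,
         Var 1 ^ \<alpha> - Var 0 * Var 2,
         Var 2 * Var 3 ^ (\<beta> - 1) - Var 1 * Var 4,
         Var 1 ^ (\<alpha> - 1) * Var 3 ^ (\<beta> - 1) - Var 0 * Var 4 })"
proof -
  have p2: "p \<ge> 2" using assms(1) prime_ge_2_nat by blast
  have "real_of_int (2 * b) > real p - 1" using assms(2) by simp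
  then have b2: "2 * b \<ge> int p" by linarith
  have b0: "b > 0" using b2 p2 by linarith
  define b' where "b' = inv_modp p b"
  have b'props: "0 < b'" "b' < int p" "(b * b') mod int p = 1"
    using inv_modp_props[OF assms(1) b0 assms(3)] unfolding b'_def by auto
  define u where "u = int p - b"
  define v where "v = int p - b'"
  have uv: "u * v = 2 * int p + 1" using assms(4) unfolding u_def v_def b'_def .
  have u1: "u \<ge> 1" using assms(3) unfolding u_def by simp
  have u2: "2 * u \<le> int p" using b2 unfolding u_def by simp
  have vp: "v < int p" using b'props unfolding v_def by simp
  have v0: "v > 0"
  proof (rule ccontr)
    assume "\<not> v > 0"
    then have "u * v \<le> 0" using u1 by (simp add: mult_nonneg_nonpos)
    then show False using uv by simp
  qed
  have oddu: "odd u" and oddv: "odd v"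
  proof -
    have "odd (u * v)" using uv by simp
    then show "odd u" "odd v" by simp_all
  qed
  have u3: "u \<ge> 3"
  proof -
    have "u \<noteq> 1" using uv vp by auto
    moreover have "u \<noteq> 2" using oddu by auto
    ultimately show ?thesis using u1 by linarith
  qed
  have v5: "v \<ge> 5"
  proof -
    have "v \<noteq> 1" using uv u2 by auto
    moreover have "v \<noteq> 3" using uv u2 p2 by auto
    moreover have "v \<noteq> 2" "v \<noteq> 4" using oddv by auto
    ultimately show ?thesis using v0 by linarith
  qed
  obtain k :: nat where k: "u = 2 * int k + 3"
  proof -
    obtain r where "u = 2 * r + 1" using oddu by (metis oddE)
    then show ?thesis using u3 that[of "nat (r - 1)"] by simp
  qed
  obtain a :: nat where a: "v = 2 * int a + 5"
  proof -
    obtain r where "v = 2 * r + 1" using oddv by (metis oddE)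
    then show ?thesis using v5 that[of "nat (r - 2)"] by simp
  qed
  interpret cfg a k .
  have "2 * int p + 1 = (2 * int k + 3) * (2 * int a + 5)" using uv k a by simp
  then have "int p = int pp" unfolding pp_def by (simp add: algebra_simps)
  then have ppp: "p = pp" by simp
  have bB: "b = Bb" unfolding Bb_def q_def using k ppp unfolding u_def by simp
  have al: "nat ((int p - inv_modp p b + 1) div 2) = a + 3"
    using a unfolding v_def b'_def by simp
  have be: "nat ((int p - b + 1) div 2) = k + 2"
    using k unfolding u_def by simp
  have card: "card (inv_gens p b) = 5"
    unfolding ppp bB inv_gens_eq by (rule z_distinct_card)
  have phiW: "phi p b P = eval_poly W P" if "in_vars 5 P" for P
    unfolding phi_def ppp bB inv_list_eq
  proof (rule eval_cong_vars[OF that])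
    fix i :: nat assume "i < 5"
    then have "i = 0 \<or> i = 1 \<or> i = 2 \<or> i = 3 \<or> i = 4" by auto
    then show "Var 0 ^ fst ([z 0, z 1, z 2, z 3, z 4] ! i) * Var 1 ^ snd ([z 0, z 1, z 2, z 3, z 4] ! i) = W i"
      by (elim disjE) (simp_all add: W_def)
  qed
  have ker: "ker_phi p b = ideal_in 5 (Gst (a+3) (k+2))"
  proof -
    have "ker_phi p b = {P. in_vars 5 P \<and> eval_poly W P = 0}"
      unfolding ker_phi_def card using phiW by auto
    also have "\<dots> = II" by (rule ker_eq)
    finally show ?thesis unfolding II_def .
  qed
  show ?thesis
    unfolding Let_def al be using card ker unfolding Gst_def by simp
qed


end
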